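(* Let $\mathbb{F}$ be any field and let $G=([n],E)$ be a simple undirected graph. Let $\mathcal{A}_G\le\Lambda(n,\mathbb{F})$ be the alternating matrix space spanned by the matrices $A_{i,j}$ with $\{i,j\}\in E$. Then: (1) for every $s\in\mathbb{N}$, $G$ has an independent set of size $s$ if and only if $\mathcal{A}_G$ has an isotropic space of dimension $s$; in particular $\alpha(G)=\alpha(\mathcal{A}_G)$; (2) for every $c\in\mathbb{N}$, $G$ has a vertex $c$-coloring (a partition of $[n]$ into $c$ independent sets) if and only if $\mathcal{A}_G$ has an isotropic $c$-decomposition; in particular $\chi(G)=\chi(\mathcal{A}_G)$.
   Context: $\Lambda(n,\mathbb{F})$ is the space of $n\times n$ alternating matrices over $\mathbb{F}$ (matrices $A$ with $v^tAv=0$ for all $v\in\mathbb{F}^n$). An alternating matrix space is a linear subspace $\mathcal{A}\le\Lambda(n,\mathbb{F})$. For $i<j$, $A_{i,j}$ is the $n\times n$ matrix with $(i,j)$ entry $1$, $(j,i)$ entry $-1$, all other entries $0$. A subspace $U\le\mathbb{F}^n$ is an isotropic space of $\mathcal{A}$ if $u^tAu'=0$ for all $u,u'\in U$ and all $A\in\mathcal{A}$. An isotropic $c$-decomposition of $\mathcal{A}$ is a direct sum decomposition $\mathbb{F}^n=U_1\oplus\cdots\oplus U_c$ into $c$ nonzero subspaces each of which is an isotropic space of $\mathcal{A}$. $\alpha(\mathcal{A})$ is the maximum dimension of an isotropic space of $\mathcal{A}$, and $\chi(\mathcal{A})$ is the minimum $c$ such that $\mathcal{A}$ admits an isotropic $c$-decomposition.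 $\alpha(G)$ and $\chi(G)$ are the independence number and chromatic number of $G$. *)

theory Defs
  imports "HOL-Analysis.Analysis"
begin

text \<open>Vertex set [n] is modelled by a finite linearly ordered type 'n (n = CARD('n));
  F^n is 'a ^ 'n for a field 'a, with the library vector space structure vec.*;
  n x n matrices are 'a ^ 'n ^ 'n.\<close>

definition simple_graph :: "('n \<Rightarrow> 'n \<Rightarrow> bool) \<Rightarrow> bool" where
  "simple_graph E \<longleftrightarrow> (\<forall>i j. E i j \<longrightarrow> E j i) \<and> (\<forall>i. \<not> E i i)"

definition elem_alt :: "'n \<Rightarrow> 'n \<Rightarrow> 'a::field ^ 'n ^ 'n" where
  "elem_alt i j = (\<chi> a b. if a = i \<and> b = j then 1 else if a = j \<and> b = i then - 1 else 0)"

definition bform :: "'a::field ^ 'n ^ 'n \<Rightarrow> 'a ^ 'n \<Rightarrow> 'a ^ 'n \<Rightarrow> 'a" where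
  "bform A u v = (\<Sum>i\<in>UNIV. \<Sum>j\<in>UNIV. u $ i * A $ i $ j * v $ j)"

definition graph_alt_space :: "('n::{finite,linorder} \<Rightarrow> 'n::{finite,linorder} \<Rightarrow> bool) \<Rightarrow> ('a::field ^ 'n::{finite,linorder} ^ 'n::{finite,linorder}) set" where
  "graph_alt_space E =
     {A. \<exists>c.
          A = (\<chi> a b. \<Sum>p\<in>{(i, j). i < j \<and> E i j}. c p * elem_alt (fst p) (snd p) $ a $ b)}"

definition isotropic :: "('a::field ^ 'n ^ 'n) set \<Rightarrow> ('a ^ 'n) set \<Rightarrow> bool" where
  "isotropic \<A> U \<longleftrightarrow> vec.subspace U \<and> (\<forall>u\<in>U. \<forall>u'\<in>U. \<forall>A\<in>\<A>. bform A u u' = 0)"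

definition isotropic_decomp :: "('a::field ^ 'n ^ 'n) set \<Rightarrow> nat \<Rightarrow> (nat \<Rightarrow> ('a ^ 'n) set) \<Rightarrow> bool" where
  "isotropic_decomp \<A> c U \<longleftrightarrow>
     (\<forall>k<c. isotropic \<A> (U k) \<and> U k \<noteq> {0}) \<and>
     (\<forall>v :: 'a ^ 'n. \<exists>!f :: nat \<Rightarrow> 'a ^ 'n.
         (\<forall>k<c. f k \<in> U k) \<and> (\<forall>k\<ge>c. f k = 0) \<and> v = (\<Sum>k<c. f k))"

definition independent_set :: "('n \<Rightarrow> 'n \<Rightarrow> bool) \<Rightarrow> 'n set \<Rightarrow> bool" where
  "independent_set E S \<longleftrightarrow> (\<forall>i\<in>S. \<forall>j\<in>S. \<not> E i j)"

definition coloring :: "('n \<Rightarrow> 'n \<Rightarrow> bool) \<Rightarrow> nat \<Rightarrow> (nat \<Rightarrow> 'n set) \<Rightarrow> bool" where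
  "coloring E c V \<longleftrightarrow>
     (\<forall>k<c. V k \<noteq> {} \<and> independent_set E (V k)) \<and>
     (\<forall>k<c. \<forall>l<c. k \<noteq> l \<longrightarrow> V k \<inter> V l = {}) \<and>
     (\<Union>k<c. V k) = UNIV"

definition graph_alpha :: "('n::finite \<Rightarrow> 'n \<Rightarrow> bool) \<Rightarrow> nat" where
  "graph_alpha E = Max {card S | S. independent_set E S}"

definition graph_chi :: "('n::finite \<Rightarrow> 'n \<Rightarrow> bool) \<Rightarrow> nat" where
  "graph_chi E = (LEAST c. \<exists>V. coloring E c V)"

definition space_alpha :: "('a::field ^ 'n::finite ^ 'n) set \<Rightarrow> nat" where
  "space_alpha \<A> = Max {vec.dim U | U. isotropic \<A> U}"

definition space_chi :: "('a::field ^ 'n::finite ^ 'n) set \<Rightarrow> nat" where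
  "space_chi \<A> = (LEAST c. \<exists>U. isotropic_decomp \<A> c U)"

end

theory Submission
  imports Defs
begin


definition supp :: "'n set \<Rightarrow> ('a::field ^ 'n) set" where
  "supp I = {v. \<forall>j. j \<notin> I \<longrightarrow> v $ j = 0}"

definition proj :: "'n set \<Rightarrow> 'a::field ^ 'n \<Rightarrow> 'a ^ 'n" where
  "proj J v = (\<chi> j. if j \<in> J then v $ j else 0)"

definition free :: "('a::field ^ 'n) set \<Rightarrow> 'n set \<Rightarrow> bool" where
  "free U S \<longleftrightarrow> (\<forall>j\<in>S. \<exists>u\<in>U. u $ j = 1 \<and> (\<forall>j'\<in>S. j' \<noteq> j \<longrightarrow> u $ j' = 0))"

definition injS :: "('a::field ^ 'n) set \<Rightarrow> 'n set \<Rightarrow> bool" where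
  "injS U S \<longleftrightarrow> (\<forall>u\<in>U. (\<forall>j\<in>S. u $ j = 0) \<longrightarrow> u = 0)"

lemma subspace_supp: "vec.subspace (supp I)"
  by (rule vec.subspaceI) (auto simp: supp_def)

lemma proj_add: "proj J (x + y) = proj J x + proj J y"
  by (simp add: proj_def vec_eq_iff)
lemma proj_scale: "proj J (c *s x) = c *s proj J x"
  by (simp add: proj_def vec_eq_iff)
lemma proj_comp: "proj J x $ j = (if j \<in> J then x $ j else 0)"
  by (simp add: proj_def)
lemma proj_supp: "proj J x \<in> supp J"
  by (simp add: proj_def supp_def)
lemma proj_id: "x \<in> supp J \<Longrightarrow> proj J x = x"
  by (auto simp: proj_def supp_def vec_eq_iff)

lemma subspace_proj_image:
  fixes U :: "('a::field ^ 'b) set"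
  assumes "vec.subspace U" shows "vec.subspace (proj J ` U)"
proof (rule vec.subspaceI)
  have "proj J 0 = (0 :: 'a ^ 'b)" by (simp add: proj_def vec_eq_iff)
  then show "0 \<in> proj J ` U" using vec.subspace_0[OF assms] by (metis image_eqI)
next
  fix x y assume "x \<in> proj J ` U" "y \<in> proj J ` U"
  then obtain a b where "a \<in> U" "b \<in> U" "x = proj J a" "y = proj J b" by auto
  then show "x + y \<in> proj J ` U"
    by (metis image_eqI proj_add vec.subspace_add assms)
next
  fix c x assume "x \<in> proj J ` U"
  then obtain a where "a \<in> U" "x = proj J a" by auto
  then show "c *s x \<in> proj J ` U"
    by (metis image_eqI proj_scale vec.subspace_scale assms)
qed

lemma dim_free:
  fixes U :: "('a::field ^ 'n::finite) set"
  assumes U: "vec.subspace U" and fr: "free U S" and inj: "injS U S"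
  shows "vec.dim U = card S"
proof -
  have fS: "finite S" by simp
  obtain g where g: "\<And>j. j \<in> S \<Longrightarrow> g j \<in> U \<and> g j $ j = 1 \<and> (\<forall>j'\<in>S. j' \<noteq> j \<longrightarrow> g j $ j' = 0)"
    using fr unfolding free_def by metis
  have ginj: "inj_on g S"
  proof (rule inj_onI)
    fix x y assume "x \<in> S" "y \<in> S" "g x = g y"
    then show "x = y" using g[of x] g[of y] by (metis zero_neq_one)
  qed
  let ?B = "g ` S"
  have BU: "?B \<subseteq> U" using g by auto
  have coord: "(\<Sum>j\<in>S. h j *s g j) $ k = h k" if "k \<in> S" for h k
  proof -
    have "(\<Sum>j\<in>S. h j *s g j) $ k = (\<Sum>j\<in>S. h j * g j $ k)" by simp
    also have "\<dots> = (\<Sum>j\<in>S. if j = k then h k else 0)"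
      by (rule sum.cong) (use g that in auto)
    also have "\<dots> = h k" using that by simp
    finally show ?thesis .
  qed
  have ind: "vec.independent ?B"
  proof (rule vec.independent_if_scalars_zero)
    show "finite ?B" by simp
  next
    fix f x assume s: "(\<Sum>x\<in>?B. f x *s x) = 0" and x: "x \<in> ?B"
    then obtain k where k: "k \<in> S" "x = g k" by auto
    have "(\<Sum>x\<in>?B. f x *s x) = (\<Sum>j\<in>S. f (g j) *s g j)"
      by (rule sum.reindex[OF ginj, unfolded comp_def])
    then have "(\<Sum>j\<in>S. f (g j) *s g j) $ k = 0" using s by simp
    then show "f x = 0" using coord[OF k(1)] k by simp
  qed
  have span: "U \<subseteq> vec.span ?B"
  proof
    fix u assume u: "u \<in> U"
    let ?w = "(\<Sum>j\<in>S. (u $ j) *s g j)"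
    have wU: "?w \<in> U" by (rule vec.subspace_sum[OF U]) (use g U vec.subspace_scale in blast)
    have "u - ?w \<in> U" using U u wU vec.subspace_diff by blast
    moreover have "\<forall>j\<in>S. (u - ?w) $ j = 0" using coord by simp
    ultimately have "u = ?w" using inj unfolding injS_def by auto
    moreover have "?w \<in> vec.span ?B"
      by (rule vec.span_sum) (simp add: vec.span_base vec.span_scale)
    ultimately show "u \<in> vec.span ?B" by simp
  qed
  show ?thesis
    by (rule vec.dim_unique[OF BU span ind]) (simp add: card_image[OF ginj])
qed



lemma extend:
  fixes U :: "('a::field ^ 'n::finite) set"
  assumes U: "vec.subspace U" and UI: "U \<subseteq> supp (insert i J)" and iJ: "i \<notin> J"
    and ww: "ww \<in> U" "ww $ i \<noteq> 0" and SJ: "S' \<subseteq> J"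
    and fr: "free (U \<inter> supp J) S'" and inj: "injS (U \<inter> supp J) S'"
  shows "free U (insert i S') \<and> injS U (insert i S')"
proof
  obtain g where g: "\<And>j. j \<in> S' \<Longrightarrow> g j \<in> U \<inter> supp J \<and> g j $ j = 1 \<and> (\<forall>j'\<in>S'. j' \<noteq> j \<longrightarrow> g j $ j' = 0)"
    using fr unfolding free_def by metis
  have gi: "g j $ i = 0" if "j \<in> S'" for j using g[OF that] iJ by (auto simp: supp_def)
  have iS: "i \<notin> S'" using SJ iJ by auto
  let ?w = "(1 / ww $ i) *s ww - (\<Sum>j\<in>S'. (ww $ j / ww $ i) *s g j)"
  have wU: "?w \<in> U"
  proof -
    have "(\<Sum>j\<in>S'. (ww $ j / ww $ i) *s g j) \<in> U"
      by (rule vec.subspace_sum[OF U]) (use g U vec.subspace_scale in blast)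
    then show ?thesis using U ww vec.subspace_diff vec.subspace_scale by blast
  qed
  have coord: "(\<Sum>j\<in>S'. h j *s g j) $ k = h k" if "k \<in> S'" for h k
  proof -
    have "(\<Sum>j\<in>S'. h j *s g j) $ k = (\<Sum>j\<in>S'. h j * g j $ k)" by simp
    also have "\<dots> = (\<Sum>j\<in>S'. if j = k then h k else 0)"
      by (rule sum.cong) (use g that in auto)
    also have "\<dots> = h k" using that by simp
    finally show ?thesis .
  qed
  have wi: "?w $ i = 1" using ww(2) gi by simp
  have wj: "?w $ j' = 0" if "j' \<in> S'" for j'
    using coord[OF that, of "\<lambda>j. ww $ j / ww $ i"] ww(2) by simp
  show "free U (insert i S')"
    unfolding free_def
  proof
    fix j assume "j \<in> insert i S'"
    then show "\<exists>u\<in>U. u $ j = 1 \<and> (\<forall>j'\<in>insert i S'. j' \<noteq> j \<longrightarrow> u $ j' = 0)"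
    proof
      assume "j = i" then show ?thesis using wU wi wj by blast
    next
      assume j: "j \<in> S'"
      then show ?thesis using g[OF j] gi[OF j] by auto
    qed
  qed
  show "injS U (insert i S')"
    unfolding injS_def
  proof (intro ballI impI)
    fix u assume u: "u \<in> U" and z: "\<forall>j\<in>insert i S'. u $ j = 0"
    have "u \<in> supp J" using UI u z unfolding supp_def by auto
    then show "u = 0" using inj u z unfolding injS_def by auto
  qed
qed

lemma single:
  fixes I :: "'n::finite set"
  shows "\<And>U :: ('a::field ^ 'n) set. vec.subspace U \<Longrightarrow> U \<subseteq> supp I \<Longrightarrow> \<exists>S\<subseteq>I. free U S \<and> injS U S"
proof (induction I rule: finite_induct[OF finite])
  case 1
  fix U :: "('a::field ^ 'n) set" assume "U \<subseteq> supp {}"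
  then have "\<forall>u\<in>U. u = 0" by (auto simp: supp_def vec_eq_iff)
  then show "\<exists>S\<subseteq>{}. free U S \<and> injS U S" by (auto simp: free_def injS_def)
next
  case (2 i J)
  fix U :: "('a::field ^ 'n) set" assume U: "vec.subspace U" and UI: "U \<subseteq> supp (insert i J)"
  show "\<exists>S\<subseteq>insert i J. free U S \<and> injS U S"
  proof (cases "\<exists>u0\<in>U. u0 $ i \<noteq> 0")
    case True
    then obtain u0 where u0: "u0 \<in> U" "u0 $ i \<noteq> 0" by auto
    have "vec.subspace (U \<inter> supp J)" using U subspace_supp vec.subspace_inter by blast
    then obtain S' where S': "S' \<subseteq> J" "free (U \<inter> supp J) S'" "injS (U \<inter> supp J) S'"
      using 2(3)[of "U \<inter> supp J"] by auto
    have "free U (insert i S') \<and> injS U (insert i S')"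
      by (rule extend[OF U UI 2(2) u0 S'])
    then show ?thesis using S'(1) by blast
  next
    case False
    have "U \<subseteq> supp J"
    proof
      fix x assume x: "x \<in> U"
      show "x \<in> supp J" unfolding supp_def
      proof (intro CollectI allI impI)
        fix j assume "j \<notin> J"
        then show "x $ j = 0" using x UI False by (cases "j = i") (auto simp: supp_def)
      qed
    qed
    then obtain S where "S \<subseteq> J" "free U S" "injS U S" using 2(3)[OF U] by auto
    then show ?thesis by blast
  qed
qed



definition dsum :: "(nat \<Rightarrow> ('a::field ^ 'n) set) \<Rightarrow> nat \<Rightarrow> 'n set \<Rightarrow> bool" where
  "dsum U c I \<longleftrightarrow> (\<forall>v\<in>supp I. \<exists>f. (\<forall>k<c. f k \<in> U k) \<and> v = (\<Sum>k<c. f k)) \<and>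
     (\<forall>f. (\<forall>k<c. f k \<in> U k) \<and> (\<Sum>k<c. f k) = 0 \<longrightarrow> (\<forall>k<c. f k = 0))"

lemma dsum_uniq:
  assumes ds: "dsum U c I" and Us: "\<forall>k<c. vec.subspace (U k)"
    and a: "\<forall>k<c. a k \<in> U k" and b: "\<forall>k<c. b k \<in> U k" and eq: "(\<Sum>k<c. a k) = (\<Sum>k<c. b k)"
  shows "\<forall>k<c. a k = b k"
proof -
  have P1: "\<forall>k<c. a k - b k \<in> U k" using a b Us vec.subspace_diff by blast
  have P2: "(\<Sum>k<c. a k - b k) = 0" using eq by (simp add: sum_subtractf)
  have H: "\<forall>f. (\<forall>k<c. f k \<in> U k) \<and> (\<Sum>k<c. f k) = 0 \<longrightarrow> (\<forall>k<c. f k = 0)"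
    using ds[unfolded dsum_def] by (rule conjunct2)
  have "\<forall>k<c. a k - b k = 0" using mp[OF spec[OF H, of "\<lambda>k. a k - b k"]] P1 P2 by simp
  then show ?thesis by simp
qed

lemma proj_sum: "proj J (sum f A) = (\<Sum>x\<in>A. proj J (f x))"
  by (simp add: vec_eq_iff proj_comp)

lemma block:
  fixes I :: "'n::finite set"
  shows "\<And>(U :: nat \<Rightarrow> ('a::field ^ 'n) set) c. (\<forall>k<c. vec.subspace (U k) \<and> U k \<subseteq> supp I) \<Longrightarrow> dsum U c I \<Longrightarrow>
     \<exists>S. (\<forall>k<c. S k \<subseteq> I \<and> free (U k) (S k) \<and> injS (U k) (S k)) \<and>
         (\<forall>k<c. \<forall>l<c. k \<noteq> l \<longrightarrow> S k \<inter> S l = {}) \<and> (\<Union>k<c. S k) = I"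
proof (induction I rule: finite_induct[OF finite])
  case 1
  fix U :: "nat \<Rightarrow> ('a::field ^ 'n) set" and c
  assume "\<forall>k<c. vec.subspace (U k) \<and> U k \<subseteq> supp {}"
  then have "\<forall>k<c. \<forall>u\<in>U k. u = 0" by (auto simp: supp_def vec_eq_iff)
  then show "\<exists>S. (\<forall>k<c. S k \<subseteq> {} \<and> free (U k) (S k) \<and> injS (U k) (S k)) \<and>
         (\<forall>k<c. \<forall>l<c. k \<noteq> l \<longrightarrow> S k \<inter> S l = {}) \<and> (\<Union>k<c. S k) = {}"
    by (intro exI[of _ "\<lambda>k. {}"]) (auto simp: free_def injS_def)
next
  case (2 i J)
  fix U :: "nat \<Rightarrow> ('a::field ^ 'n) set" and c
  assume Us: "\<forall>k<c. vec.subspace (U k) \<and> U k \<subseteq> supp (insert i J)" and ds: "dsum U c (insert i J)"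
  have iJ: "i \<notin> J" by fact
  have Usub: "\<forall>k<c. vec.subspace (U k)" using Us by blast
  define e :: "'a ^ 'n" where "e = (\<chi> j. if j = i then 1 else 0)"
  have e_supp: "e \<in> supp (insert i J)" by (simp add: e_def supp_def)
  obtain u where u: "\<forall>k<c. u k \<in> U k" and ue: "e = (\<Sum>k<c. u k)"
    using bspec[OF ds[unfolded dsum_def, THEN conjunct1] e_supp] by blast
  have ei: "e $ i = 1" by (simp add: e_def)
  have "(\<Sum>k<c. u k $ i) = 1" using ue ei by simp
  then obtain k0 where k0: "k0 < c" "u k0 $ i \<noteq> 0"
    by (metis (mono_tags, lifting) lessThan_iff sum.neutral zero_neq_one)
  have decomp: "g = proj J g + (g $ i) *s e" if "g \<in> supp (insert i J)" for g
    using that iJ by (auto simp: vec_eq_iff proj_comp e_def supp_def)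
  define U' where "U' k = (if k = k0 then U k \<inter> supp J else proj J ` U k)" for k
  have Us': "\<forall>k<c. vec.subspace (U' k) \<and> U' k \<subseteq> supp J"
    using Us by (auto simp: U'_def proj_supp intro: subspace_proj_image vec.subspace_inter subspace_supp)
  have ds': "dsum U' c J"
    unfolding dsum_def
  proof (intro conjI ballI allI impI)
    fix v :: "'a ^ 'n" assume v: "v \<in> supp J"
    then have "v \<in> supp (insert i J)" by (auto simp: supp_def)
    then obtain x where x: "\<forall>k<c. x k \<in> U k" and xv: "v = (\<Sum>k<c. x k)"
      using bspec[OF ds[unfolded dsum_def, THEN conjunct1]] \<open>v \<in> supp (insert i J)\<close> by blast
    define \<beta> where "\<beta> = x k0 $ i / u k0 $ i"
    define y where "y k = x k - \<beta> *s u k" for k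
    have yU: "\<forall>k<c. y k \<in> U k" using x u Usub unfolding y_def
      by (meson vec.subspace_diff vec.subspace_scale)
    have "y k0 $ i = 0" using k0 by (simp add: y_def \<beta>_def)
    have yk0: "y k0 \<in> supp (insert i J)" using yU k0 Us by blast
    have yJ: "y k0 \<in> supp J" unfolding supp_def
    proof (intro CollectI allI impI)
      fix j assume "j \<notin> J"
      then show "y k0 $ j = 0" using yk0 \<open>y k0 $ i = 0\<close> by (cases "j = i") (auto simp: supp_def)
    qed
    have "(\<Sum>k<c. y k) = v - \<beta> *s e"
      by (simp add: y_def sum_subtractf vec.scale_sum_right xv ue)
    then have "(\<Sum>k<c. proj J (y k)) = v"
      using v iJ by (auto simp: proj_sum[symmetric] vec_eq_iff proj_comp e_def supp_def)
    moreover have "\<forall>k<c. proj J (y k) \<in> U' k"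
      using yU yJ by (auto simp: U'_def proj_id)
    ultimately show "\<exists>f. (\<forall>k<c. f k \<in> U' k) \<and> v = (\<Sum>k<c. f k)" by metis
  next
    fix f :: "nat \<Rightarrow> 'a ^ 'n" and k
    assume f: "(\<forall>k<c. f k \<in> U' k) \<and> (\<Sum>k<c. f k) = 0" and kc: "k < c"
    have "\<forall>k. \<exists>g. k < c \<longrightarrow> g \<in> U k \<and> f k = proj J g \<and> (k = k0 \<longrightarrow> g = f k0)"
    proof
      fix k show "\<exists>g. k < c \<longrightarrow> g \<in> U k \<and> f k = proj J g \<and> (k = k0 \<longrightarrow> g = f k0)"
      proof (cases "k < c")
        case True
        show ?thesis
        proof (cases "k = k0")
          case True
          then show ?thesis using f \<open>k<c\<close> by (auto simp: U'_def proj_id)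
        next
          case False
          have "f k \<in> U' k" using f \<open>k<c\<close> by blast
          then have "f k \<in> proj J ` U k" using False by (simp add: U'_def)
          then obtain g where "g \<in> U k" "f k = proj J g" by blast
          then show ?thesis using False by blast
        qed
      qed auto
    qed
    then obtain g where g: "\<And>k. k < c \<Longrightarrow> g k \<in> U k \<and> f k = proj J (g k) \<and> (k = k0 \<longrightarrow> g k = f k0)"
      by metis
    define T where "T = (\<Sum>k<c. g k $ i)"
    have gs: "g k \<in> supp (insert i J)" if "k < c" for k using g[OF that] Us that by blast
    have "(\<Sum>k<c. g k) = (\<Sum>k<c. proj J (g k) + (g k $ i) *s e)"
      by (rule sum.cong) (use decomp gs in auto)
    also have "\<dots> = (\<Sum>k<c. f k) + T *s e"
      by (simp add: sum.distrib T_def vec.scale_sum_left g)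
    also have "\<dots> = (\<Sum>k<c. T *s u k)" using f by (simp add: ue vec.scale_sum_right)
    finally have "\<forall>k<c. g k = T *s u k"
      by (intro dsum_uniq[OF ds Usub]) (use g u Usub in \<open>auto intro: vec.subspace_scale\<close>)
    moreover have "g k0 $ i = 0"
    proof -
      have gk0: "g k0 = f k0" using g[OF k0(1)] by blast
      have "f k0 \<in> U' k0" using f k0(1) by blast
      then have "f k0 \<in> supp J" by (simp add: U'_def)
      then show ?thesis using gk0 iJ by (simp add: supp_def)
    qed
    ultimately have "T = 0" using k0 by auto
    then show "f k = 0" using g[OF kc] \<open>\<forall>k<c. g k = T *s u k\<close> kc
      by (simp add: proj_def vec_eq_iff)
  qed
  obtain S' where S': "\<forall>k<c. S' k \<subseteq> J \<and> free (U' k) (S' k) \<and> injS (U' k) (S' k)"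
    and S'd: "\<forall>k<c. \<forall>l<c. k \<noteq> l \<longrightarrow> S' k \<inter> S' l = {}" and S'u: "(\<Union>k<c. S' k) = J"
    using 2(3)[OF Us' ds'] by blast
  define S where "S k = (if k = k0 then insert i (S' k) else S' k)" for k
  have props: "S k \<subseteq> insert i J \<and> free (U k) (S k) \<and> injS (U k) (S k)" if kc: "k < c" for k
  proof (cases "k = k0")
    case True
    have "free (U k) (insert i (S' k)) \<and> injS (U k) (insert i (S' k))"
      apply (rule extend[where ww = "u k0"])
      using Us kc u k0 iJ S' True by (auto simp: U'_def)
    then show ?thesis using S' kc True by (auto simp: S_def)
  next
    case False
    have SJ: "S' k \<subseteq> J" using S' kc by blast
    have fr: "free (U k) (S' k)"
      unfolding free_def
    proof
      fix j assume j: "j \<in> S' k"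
      obtain w where w: "w \<in> U' k" "w $ j = 1" "\<forall>j'\<in>S' k. j' \<noteq> j \<longrightarrow> w $ j' = 0"
        using S' kc j unfolding free_def by blast
      then obtain g where g: "g \<in> U k" "w = proj J g" using False by (auto simp: U'_def)
      have g1: "g $ j = 1" using w(2) g(2) SJ j by (auto simp: proj_comp)
      have g2: "\<forall>j'\<in>S' k. j' \<noteq> j \<longrightarrow> g $ j' = 0"
      proof (intro ballI impI)
        fix j' assume "j' \<in> S' k" "j' \<noteq> j"
        then have w0: "w $ j' = 0" and jJ: "j' \<in> J" using w(3) SJ by blast+
        then show "g $ j' = 0" using g(2) by (simp add: proj_comp)
      qed
      show "\<exists>u\<in>U k. u $ j = 1 \<and> (\<forall>j'\<in>S' k. j' \<noteq> j \<longrightarrow> u $ j' = 0)"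
        using g(1) g1 g2 by blast
    qed
    have inj: "injS (U k) (S' k)"
      unfolding injS_def
    proof (intro ballI impI)
      fix g assume gU: "g \<in> U k" and z: "\<forall>j\<in>S' k. g $ j = 0"
      have "proj J g \<in> U' k" using gU False by (auto simp: U'_def)
      moreover have "\<forall>j\<in>S' k. proj J g $ j = 0" using z by (simp add: proj_comp)
      ultimately have p0: "proj J g = 0" using S' kc unfolding injS_def by blast
      have gsup: "g \<in> supp (insert i J)" using gU Us kc by blast
      have geq: "g = (g $ i) *s e" using decomp[OF gsup] p0 by simp
      show "g = 0"
      proof (rule ccontr)
        assume "g \<noteq> 0"
        then have gi: "g $ i \<noteq> 0" using geq by auto
        have h1: "(1 / g $ i) *s g = (1 / g $ i) *s ((g $ i) *s e)"
          by (rule arg_cong[where f="\<lambda>x. (1 / g $ i) *s x", OF geq])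
        have h2: "(1 / g $ i) *s ((g $ i) *s e) = e" using gi by (simp add: vec_eq_iff)
        have "e = (1 / g $ i) *s g" using h1 h2 by simp
        then have eU: "e \<in> U k" using gU Usub kc vec.subspace_scale by metis
        define a where "a l = (if l = k then e else 0)" for l
        have aU: "\<forall>l<c. a l \<in> U l" using eU Usub by (auto simp: a_def vec.subspace_0)
        have sa: "(\<Sum>l<c. a l) = e" using kc by (simp add: a_def)
        have "(\<Sum>l<c. u l) = (\<Sum>l<c. a l)" by (simp only: sa ue[symmetric])
        then have "\<forall>l<c. u l = a l" by (rule dsum_uniq[OF ds Usub u aU])
        then have "u k0 = 0" using k0 False by (simp add: a_def)
        then show False using k0 by simp
      qed
    qed
    show ?thesis using SJ fr inj False by (auto simp: S_def)
  qed
  have disj: "\<forall>k<c. \<forall>l<c. k \<noteq> l \<longrightarrow> S k \<inter> S l = {}"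
    using S'd S' iJ by (auto simp: S_def)
  have un: "(\<Union>k<c. S k) = insert i J"
  proof
    show "(\<Union>k<c. S k) \<subseteq> insert i J" using props by blast
    show "insert i J \<subseteq> (\<Union>k<c. S k)" using S'u k0 by (auto simp: S_def split: if_splits)
  qed
  show "\<exists>S. (\<forall>k<c. S k \<subseteq> insert i J \<and> free (U k) (S k) \<and> injS (U k) (S k)) \<and>
         (\<forall>k<c. \<forall>l<c. k \<noteq> l \<longrightarrow> S k \<inter> S l = {}) \<and> (\<Union>k<c. S k) = insert i J"
    using props disj un by blast
qed



lemma elem_in:
  fixes E :: "'n::{finite,linorder} \<Rightarrow> 'n \<Rightarrow> bool"
  assumes "i < j" "E i j"
  shows "(elem_alt i j :: 'a::field ^ 'n::{finite,linorder} ^ 'n::{finite,linorder}) \<in> graph_alt_space E"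
proof -
  let ?P = "{(i, j). i < j \<and> E i j}"
  let ?c = "\<lambda>p. if p = (i, j) then (1::'a) else 0"
  have eq: "(\<chi> a b. \<Sum>p\<in>?P. ?c p * elem_alt (fst p) (snd p) $ a $ b) = (elem_alt i j :: 'a ^ 'n::{finite,linorder} ^ 'n::{finite,linorder})"
  proof -
    have "(\<Sum>p\<in>?P. ?c p * (elem_alt (fst p) (snd p) :: 'a ^ 'n::{finite,linorder} ^ 'n::{finite,linorder}) $ a $ b) = elem_alt i j $ a $ b" for a b
    proof -
      have "(\<Sum>p\<in>?P. ?c p * (elem_alt (fst p) (snd p) :: 'a ^ 'n::{finite,linorder} ^ 'n::{finite,linorder}) $ a $ b)
          = (\<Sum>p\<in>?P. if p = (i, j) then (elem_alt (fst p) (snd p) :: 'a ^ 'n::{finite,linorder} ^ 'n::{finite,linorder}) $ a $ b else 0)"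
        by (rule sum.cong) auto
      also have "\<dots> = elem_alt i j $ a $ b" using assms by (simp add: sum.delta')
      finally show ?thesis .
    qed
    then show ?thesis by (simp add: vec_eq_iff)
  qed
  show ?thesis unfolding graph_alt_space_def mem_Collect_eq
    by (rule exI[of _ ?c]) (rule eq[symmetric])
qed

lemma bform_elem:
  fixes u v :: "'a::field ^ 'n::finite"
  assumes ij: "i \<noteq> j"
  shows "bform (elem_alt i j) u v = u $ i * v $ j - u $ j * v $ i"
proof -
  have inner: "(\<Sum>b\<in>UNIV. u $ a * elem_alt i j $ a $ b * v $ b) =
     (if a = i then u $ i * v $ j else 0) + (if a = j then - (u $ j * v $ i) else 0)" for a
  proof (cases "a = i")
    case True
    have "(\<Sum>b\<in>UNIV. u $ a * elem_alt i j $ a $ b * v $ b) = (\<Sum>b\<in>UNIV. if b = j then u $ i * v $ j else 0)"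
      by (rule sum.cong) (use True ij in \<open>auto simp: elem_alt_def\<close>)
    then show ?thesis using True ij by simp
  next
    case False
    show ?thesis
    proof (cases "a = j")
      case True
      have "(\<Sum>b\<in>UNIV. u $ a * elem_alt i j $ a $ b * v $ b) = (\<Sum>b\<in>UNIV. if b = i then - (u $ j * v $ i) else 0)"
        by (rule sum.cong) (use True ij in \<open>auto simp: elem_alt_def\<close>)
      then show ?thesis using True ij by simp
    next
      case F2: False
      have "(\<Sum>b\<in>UNIV. u $ a * elem_alt i j $ a $ b * v $ b) = 0"
        by (rule sum.neutral) (use False F2 in \<open>auto simp: elem_alt_def\<close>)
      then show ?thesis using False F2 by simp
    qed
  qed
  have "bform (elem_alt i j) u v = (\<Sum>a\<in>UNIV. (if a = i then u $ i * v $ j else 0) + (if a = j then - (u $ j * v $ i) else 0))"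
    unfolding bform_def using inner by simp
  also have "\<dots> = u $ i * v $ j - u $ j * v $ i"
    by (simp only: sum.distrib sum.delta' finite UNIV_I if_True) simp
  finally show ?thesis .
qed

lemma free_indep:
  fixes E :: "'n::{finite,linorder} \<Rightarrow> 'n \<Rightarrow> bool"
    and U :: "('a::field ^ 'n::{finite,linorder}) set"
  assumes sg: "simple_graph E" and iso: "isotropic (graph_alt_space E :: ('a ^ 'n::{finite,linorder} ^ 'n::{finite,linorder}) set) U"
    and fr: "free U S"
  shows "independent_set E S"
  unfolding independent_set_def
proof (intro ballI notI)
  fix i j assume i: "i \<in> S" and j: "j \<in> S" and e: "E i j"
  have ij: "i \<noteq> j" using sg e unfolding simple_graph_def by auto
  obtain u where u: "u \<in> U" "u $ i = 1" "u $ j = 0" using fr i j ij unfolding free_def by metis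
  obtain w where w: "w \<in> U" "w $ j = 1" "w $ i = 0" using fr i j ij unfolding free_def by metis
  show False
  proof (cases "i < j")
    case True
    have "(elem_alt i j :: 'a ^ 'n::{finite,linorder} ^ 'n::{finite,linorder}) \<in> graph_alt_space E" using elem_in[of i j E] True e by blast
    then have "bform (elem_alt i j :: 'a ^ 'n::{finite,linorder} ^ 'n::{finite,linorder}) u w = 0" using iso u w unfolding isotropic_def by blast
    then show False using bform_elem[OF ij, of u w] u w by simp
  next
    case False
    then have ji: "j < i" using ij by auto
    have "E j i" using sg e unfolding simple_graph_def by auto
    then have "(elem_alt j i :: 'a ^ 'n::{finite,linorder} ^ 'n::{finite,linorder}) \<in> graph_alt_space E" using elem_in[of j i E] ji by blast
    then have "bform (elem_alt j i :: 'a ^ 'n::{finite,linorder} ^ 'n::{finite,linorder}) u w = 0" using iso u w unfolding isotropic_def by blast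
    then show False using bform_elem[of j i u w] ij u w by simp
  qed
qed

lemma supp_iso:
  fixes E :: "'n::{finite,linorder} \<Rightarrow> 'n \<Rightarrow> bool"
  assumes ind: "independent_set E S"
  shows "isotropic (graph_alt_space E :: ('a::field ^ 'n::{finite,linorder} ^ 'n::{finite,linorder}) set) (supp S)"
  unfolding isotropic_def
proof (intro conjI ballI)
  show "vec.subspace (supp S :: ('a ^ 'n::{finite,linorder}) set)" by (rule subspace_supp)
next
  fix u v :: "'a ^ 'n::{finite,linorder}" and A :: "'a ^ 'n::{finite,linorder} ^ 'n::{finite,linorder}"
  assume u: "u \<in> supp S" and v: "v \<in> supp S" and A: "A \<in> graph_alt_space E"
  let ?P = "{(i, j). i < j \<and> E i j}"
  obtain c where Ac: "A = (\<chi> a b. \<Sum>p\<in>?P. c p * elem_alt (fst p) (snd p) $ a $ b)"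
    using A unfolding graph_alt_space_def by blast
  have term0: "u $ a * (c p * (elem_alt (fst p) (snd p) :: 'a ^ 'n::{finite,linorder} ^ 'n::{finite,linorder}) $ a $ b) * v $ b = 0"
    if p: "p \<in> ?P" for a b p
  proof (cases "a \<in> S \<and> b \<in> S")
    case True
    obtain i j where pij: "p = (i, j)" "E i j" using p by auto
    have "\<not> E a b" "\<not> E b a" using ind True unfolding independent_set_def by auto
    then have "(elem_alt i j :: 'a ^ 'n::{finite,linorder} ^ 'n::{finite,linorder}) $ a $ b = 0" using pij unfolding elem_alt_def by auto
    then show ?thesis using pij by simp
  next
    case False
    then have "u $ a = 0 \<or> v $ b = 0" using u v unfolding supp_def by auto
    then show ?thesis by auto
  qed
  have "bform A u v = (\<Sum>a\<in>UNIV. \<Sum>b\<in>UNIV. \<Sum>p\<in>?P. u $ a * (c p * (elem_alt (fst p) (snd p) :: 'a ^ 'n::{finite,linorder} ^ 'n::{finite,linorder}) $ a $ b) * v $ b)"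
    unfolding bform_def Ac by (simp add: sum_distrib_left sum_distrib_right)
  also have "\<dots> = 0" by (intro sum.neutral ballI term0)
  finally show "bform A u v = 0" .
qed

lemma dim_supp: "vec.dim (supp S :: ('a::field ^ 'n::finite) set) = card S"
proof (rule dim_free[OF subspace_supp])
  show "free (supp S :: ('a ^ 'n) set) S" unfolding free_def
  proof
    fix j assume "j \<in> S"
    then show "\<exists>u\<in>supp S. u $ j = 1 \<and> (\<forall>j'\<in>S. j' \<noteq> j \<longrightarrow> u $ j' = (0::'a))"
      by (intro bexI[of _ "\<chi> x. if x = j then 1 else 0"]) (auto simp: supp_def)
  qed
  show "injS (supp S :: ('a ^ 'n) set) S" unfolding injS_def supp_def
    by (auto simp: vec_eq_iff)
qed

lemma decomp_dsum:
  assumes d: "isotropic_decomp \<A> c U"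
  shows "dsum U c UNIV \<and> (\<forall>k<c. vec.subspace (U k) \<and> U k \<subseteq> supp UNIV)"
proof -
  have sub: "\<forall>k<c. vec.subspace (U k)" using d unfolding isotropic_decomp_def isotropic_def by blast
  have ex: "\<forall>v \<in> supp UNIV. \<exists>f. (\<forall>k<c. f k \<in> U k) \<and> v = (\<Sum>k<c. f k)"
    using d unfolding isotropic_decomp_def by metis
  have un: "\<forall>k<c. f k = 0" if f: "\<forall>k<c. f k \<in> U k" "(\<Sum>k<c. f k) = 0" for f
  proof -
    define f' where "f' k = (if k < c then f k else 0)" for k
    have s': "(\<Sum>k<c. f' k) = 0" using f(2) by (simp add: f'_def)
    have p1: "(\<forall>k<c. f' k \<in> U k) \<and> (\<forall>k\<ge>c. f' k = 0) \<and> 0 = (\<Sum>k<c. f' k)"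
      using f s' by (simp add: f'_def)
    have p2: "(\<forall>k<c. (\<lambda>_. 0) k \<in> U k) \<and> (\<forall>k\<ge>c. (\<lambda>_. 0::'a ^ 'b) k = 0) \<and> 0 = (\<Sum>k<c. (\<lambda>_. 0::'a ^ 'b) k)"
      using sub vec.subspace_0 by auto
    have "f' = (\<lambda>_. 0)" using d p1 p2 unfolding isotropic_decomp_def by metis
    then show ?thesis by (metis f'_def)
  qed
  show ?thesis using ex un sub unfolding dsum_def by (auto simp: supp_def)
qed

theorem theorem1p4:
  fixes E :: "'n::{finite,linorder} \<Rightarrow> 'n \<Rightarrow> bool"
  assumes "simple_graph E"
  shows "(\<forall>s::nat. (\<exists>S. independent_set E S \<and> card S = s) \<longleftrightarrow>
                   (\<exists>U. isotropic (graph_alt_space E :: ('a::field ^ 'n::{finite,linorder} ^ 'n::{finite,linorder}) set) U \<and> vec.dim U = s))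
       \<and> graph_alpha E = space_alpha (graph_alt_space E :: ('a::field ^ 'n::{finite,linorder} ^ 'n::{finite,linorder}) set)
       \<and> (\<forall>c::nat. (\<exists>V. coloring E c V) \<longleftrightarrow>
                   (\<exists>U. isotropic_decomp (graph_alt_space E :: ('a::field ^ 'n::{finite,linorder} ^ 'n::{finite,linorder}) set) c U))
       \<and> graph_chi E = space_chi (graph_alt_space E :: ('a::field ^ 'n::{finite,linorder} ^ 'n::{finite,linorder}) set)"
proof -
  let ?A = "graph_alt_space E :: ('a ^ 'n::{finite,linorder} ^ 'n::{finite,linorder}) set"
  have P1: "(\<exists>S. independent_set E S \<and> card S = s) \<longleftrightarrow> (\<exists>U. isotropic ?A U \<and> vec.dim U = s)" for s
  proof
    assume "\<exists>S. independent_set E S \<and> card S = s"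
    then obtain S where S: "independent_set E S" "card S = s" by blast
    have "isotropic ?A (supp S)" by (rule supp_iso[OF S(1)])
    moreover have "vec.dim (supp S :: ('a ^ 'n::{finite,linorder}) set) = s" using S(2) dim_supp by metis
    ultimately show "\<exists>U. isotropic ?A U \<and> vec.dim U = s" by blast
  next
    assume "\<exists>U. isotropic ?A U \<and> vec.dim U = s"
    then obtain U where U: "isotropic ?A U" "vec.dim U = s" by blast
    have sU: "vec.subspace U" using U(1) unfolding isotropic_def by blast
    obtain S where S: "free U S" "injS U S"
      using single[OF sU, of UNIV] by (auto simp: supp_def)
    have "card S = s" using dim_free[OF sU S] U(2) by simp
    moreover have "independent_set E S" by (rule free_indep[OF assms U(1) S(1)])
    ultimately show "\<exists>S. independent_set E S \<and> card S = s" by blast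
  qed
  have P2: "(\<exists>V. coloring E c V) \<longleftrightarrow> (\<exists>U. isotropic_decomp ?A c U)" for c
  proof
    assume "\<exists>V. coloring E c V"
    then obtain V where V: "coloring E c V" by blast
    have Vne: "\<forall>k<c. V k \<noteq> {}" and Vind: "\<forall>k<c. independent_set E (V k)"
      and Vd: "\<forall>k<c. \<forall>l<c. k \<noteq> l \<longrightarrow> V k \<inter> V l = {}" and Vu: "(\<Union>k<c. V k) = UNIV"
      using V unfolding coloring_def by auto
    define U where "U k = (supp (V k) :: ('a ^ 'n::{finite,linorder}) set)" for k
    have iso: "\<forall>k<c. isotropic ?A (U k) \<and> U k \<noteq> {0}"
    proof (intro allI impI conjI)
      fix k assume k: "k < c"
      show "isotropic ?A (U k)" unfolding U_def by (rule supp_iso) (use Vind k in blast)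
      obtain j where j: "j \<in> V k" using Vne k by blast
      have "(\<chi> x. if x = j then (1::'a) else 0) \<in> U k" using j by (auto simp: U_def supp_def)
      moreover have "(\<chi> x. if x = j then (1::'a) else 0) \<noteq> 0" by (auto simp: vec_eq_iff)
      ultimately show "U k \<noteq> {0}" by blast
    qed
    have uniqk: "\<exists>!k. k < c \<and> j \<in> V k" for j
      using Vu Vd by blast
    have decomp: "\<exists>!f. (\<forall>k<c. f k \<in> U k) \<and> (\<forall>k\<ge>c. f k = 0) \<and> v = (\<Sum>k<c. f k)" for v :: "'a ^ 'n::{finite,linorder}"
    proof -
      define f0 where "f0 k = (if k < c then proj (V k) v else 0)" for k
      have sumj: "(\<Sum>k<c. (if j \<in> V k then x else 0)) = x" for j and x :: 'a
      proof -
        obtain kj where kj: "kj < c" "j \<in> V kj" "\<forall>k. k < c \<and> j \<in> V k \<longrightarrow> k = kj"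
          using uniqk[of j] by blast
        have "(\<Sum>k<c. (if j \<in> V k then x else 0)) = (\<Sum>k<c. (if k = kj then x else 0))"
        proof (rule sum.cong[OF refl])
          fix k assume "k \<in> {..<c}"
          then have "j \<in> V k \<longleftrightarrow> k = kj" using kj by blast
          then show "(if j \<in> V k then x else 0) = (if k = kj then x else 0)" by simp
        qed
        also have "\<dots> = x" using kj(1) by simp
        finally show ?thesis .
      qed
      have f0ok: "(\<forall>k<c. f0 k \<in> U k) \<and> (\<forall>k\<ge>c. f0 k = 0) \<and> v = (\<Sum>k<c. f0 k)"
      proof (intro conjI allI impI)
        show "v = (\<Sum>k<c. f0 k)" by (simp add: vec_eq_iff f0_def proj_comp sumj)
      qed (auto simp: f0_def U_def proj_supp)
      show ?thesis
      proof (rule ex1I[of _ f0])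
        show "(\<forall>k<c. f0 k \<in> U k) \<and> (\<forall>k\<ge>c. f0 k = 0) \<and> v = (\<Sum>k<c. f0 k)" by (rule f0ok)
      next
        fix f assume f: "(\<forall>k<c. f k \<in> U k) \<and> (\<forall>k\<ge>c. f k = 0) \<and> v = (\<Sum>k<c. f k)"
        show "f = f0"
        proof
          fix k show "f k = f0 k"
          proof (cases "k < c")
            case False then show ?thesis using f by (simp add: f0_def)
          next
            case True
            show ?thesis
            proof (subst vec_eq_iff, intro allI)
              fix j
              show "f k $ j = f0 k $ j"
              proof (cases "j \<in> V k")
                case False
                then show ?thesis using f True by (auto simp: f0_def proj_comp U_def supp_def)
              next
                case jin: True
                have "v $ j = (\<Sum>l<c. f l $ j)" using f by simp
                also have "\<dots> = (\<Sum>l<c. if l = k then f k $ j else 0)"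
                proof (rule sum.cong)
                  fix l assume l: "l \<in> {..<c}"
                  show "f l $ j = (if l = k then f k $ j else 0)"
                  proof (cases "l = k")
                    case False
                    then have "j \<notin> V l" using Vd l True jin by blast
                    then show ?thesis using f l False by (auto simp: U_def supp_def)
                  qed simp
                qed simp
                also have "\<dots> = f k $ j" using True by simp
                finally show ?thesis using True jin by (simp add: f0_def proj_comp)
              qed
            qed
          qed
        qed
      qed
    qed
    have "isotropic_decomp ?A c U" unfolding isotropic_decomp_def using iso decomp by blast
    then show "\<exists>U. isotropic_decomp ?A c U" by blast
  next
    assume "\<exists>U. isotropic_decomp ?A c U"
    then obtain U where U: "isotropic_decomp ?A c U" by blast
    have iso: "\<forall>k<c. isotropic ?A (U k) \<and> U k \<noteq> {0}" using U unfolding isotropic_decomp_def by blast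
    have dd: "dsum U c UNIV \<and> (\<forall>k<c. vec.subspace (U k) \<and> U k \<subseteq> supp UNIV)" by (rule decomp_dsum[OF U])
    have "\<exists>S. (\<forall>k<c. S k \<subseteq> UNIV \<and> free (U k) (S k) \<and> injS (U k) (S k)) \<and>
         (\<forall>k<c. \<forall>l<c. k \<noteq> l \<longrightarrow> S k \<inter> S l = {}) \<and> (\<Union>k<c. S k) = UNIV"
      by (rule block[where U=U and c=c and I=UNIV]) (use dd in blast)+
    then obtain S where S: "\<forall>k<c. S k \<subseteq> UNIV \<and> free (U k) (S k) \<and> injS (U k) (S k)"
      and Sd: "\<forall>k<c. \<forall>l<c. k \<noteq> l \<longrightarrow> S k \<inter> S l = {}" and Su: "(\<Union>k<c. S k) = UNIV"
      by blast
    have "coloring E c S" unfolding coloring_def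
    proof (intro conjI allI impI)
      fix k assume k: "k < c"
      have sU: "vec.subspace (U k)" using dd k by blast
      obtain u where u: "u \<in> U k" "u \<noteq> 0" using iso k sU vec.subspace_0 by blast
      show "S k \<noteq> {}"
      proof
        assume "S k = {}"
        then have "u = 0" using S k u(1) unfolding injS_def by auto
        then show False using u(2) by simp
      qed
      show "independent_set E (S k)" by (rule free_indep[OF assms]) (use iso S k in blast)+
    qed (use Sd Su in auto)
    then show "\<exists>V. coloring E c V" by blast
  qed
  have A1: "graph_alpha E = space_alpha ?A"
  proof -
    have "{card S | S. independent_set E S} = {vec.dim U | U. isotropic ?A U}"
    proof (rule set_eqI)
      fix n
      have L: "n \<in> {card S | S. independent_set E S} \<longleftrightarrow> (\<exists>S. independent_set E S \<and> card S = n)" by blast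
      have R: "n \<in> {vec.dim U | U. isotropic ?A U} \<longleftrightarrow> (\<exists>U. isotropic ?A U \<and> vec.dim U = n)" by blast
      show "n \<in> {card S | S. independent_set E S} \<longleftrightarrow> n \<in> {vec.dim U | U. isotropic ?A U}"
        unfolding L R by (rule P1)
    qed
    then show ?thesis unfolding graph_alpha_def space_alpha_def by simp
  qed
  have C1: "graph_chi E = space_chi ?A"
    unfolding graph_chi_def space_chi_def using P2 by simp
  show ?thesis using P1 A1 P2 C1 by blast
qed

end
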